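(* Consider $M+1$ base stations indexed $i\in\{0,1,\dots,M\}$ and a finite set $\mathcal{N}$ of users. For each base station $i$ and user $j$, let $\eta_{i,j}\in[0,1)$ be the SINR of user $j$ with respect to base station $i$, and let $B>0$ be the bandwidth. An assignment is a family $(U_0,\dots,U_M)$ of pairwise disjoint subsets of $\mathcal{N}$ ($U_i$ is the set of users served by base station $i$, $N_i=|U_i|$). Its total network capacity is $$C_{tot}(U_0,\dots,U_M)=\sum_{i:\,N_i>0}\frac{B}{N_i}\sum_{j\in U_i}\log_2\!\left(\frac{1}{1-\eta_{i,j}}\right),$$ and let $C_{NC}=\max C_{tot}(U_0,\dots,U_M)$, the maximum over all assignments (the network-capacity-maximizing scheme). Fix thresholds $\lambda_1<\lambda_2<\dots<\lambda_q$ and define the level $L_{i,j}=0$ if $\eta_{i,j}<\lambda_1$, $L_{i,j}=l$ if $\lambda_l\le\eta_{i,j}<\lambda_{l+1}$ for $l\in\{1,\dots,q-1\}$, and $L_{i,j}=q$ if $\eta_{i,j}\ge\lambda_q$. For an assignment, put $U_{i,l}=\{j\in U_i: L_{i,j}=l\}$, $N_{i,l}=|U_{i,l}|$, and let $\overline{\eta}_{i,l}$ be the arithmetic mean of $\{\eta_{i,j}: j\in U_{i,l}\}$ when $N_{i,l}>0$. Define the grouped capacity $$C_{UC}(U_0,\dots,U_M)=\sum_{i:\,N_i>0}B\sum_{l:\,N_{i,l}>0}\frac{N_{i,l}}{N_i}\log_2\!\left(\frac{1}{1-\overline{\eta}_{i,l}}\right).$$ Then for every assignment $(U_0,\dots,U_M)$,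 $C_{UC}(U_0,\dots,U_M)\le C_{NC}$; that is, $C_{NC}$ is an upper bound of $C_{UC}$.
   Context: Setting: downlink femtocell network with one macrocell base station (index $0$) and $M$ femtocell base stations; each user connects to at most one base station, and the bandwidth $B$ of a base station is divided equally among its $N_i$ served users, so a user $j$ served by station $i$ has capacity $\frac{B}{N_i}\log_2\frac{1}{1-\eta_{i,j}}$, where $\eta_{i,j}=|h_{i,j}|^2P_i/(\sigma^2+\sum_{l=0}^M|h_{l,j}|^2P_l)$ lies in $[0,1)$. $C_{UC}$ is the capacity of the proposed user-classification scheme, in which each user's SINR is replaced by the average SINR of its level group at its base station. *)

theory Defs
  imports Complex_Main
begin

definition is_assignment :: "nat \<Rightarrow> 'u set \<Rightarrow> (nat \<Rightarrow> 'u set) \<Rightarrow> bool" where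
  "is_assignment M Nset U \<longleftrightarrow>
     (\<forall>i\<in>{0..M}. U i \<subseteq> Nset) \<and>
     (\<forall>i\<in>{0..M}. \<forall>k\<in>{0..M}. i \<noteq> k \<longrightarrow> U i \<inter> U k = {})"

definition C_tot :: "nat \<Rightarrow> real \<Rightarrow> (nat \<Rightarrow> 'u \<Rightarrow> real) \<Rightarrow> (nat \<Rightarrow> 'u set) \<Rightarrow> real" where
  "C_tot M B eta U =
     (\<Sum>i\<in>{i\<in>{0..M}. card (U i) > 0}.
        B / real (card (U i)) * (\<Sum>j\<in>U i. log 2 (1 / (1 - eta i j))))"

definition C_NC :: "nat \<Rightarrow> 'u set \<Rightarrow> real \<Rightarrow> (nat \<Rightarrow> 'u \<Rightarrow> real) \<Rightarrow> real" where
  "C_NC M Nset B eta = Max {C_tot M B eta U | U. is_assignment M Nset U}"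

definition level :: "(nat \<Rightarrow> real) \<Rightarrow> nat \<Rightarrow> real \<Rightarrow> nat" where
  "level lam q x =
     (if x < lam 1 then 0
      else if lam q \<le> x then q
      else (THE l. l \<in> {1..q-1} \<and> lam l \<le> x \<and> x < lam (l+1)))"

definition level_group :: "(nat \<Rightarrow> real) \<Rightarrow> nat \<Rightarrow> (nat \<Rightarrow> 'u \<Rightarrow> real) \<Rightarrow> (nat \<Rightarrow> 'u set) \<Rightarrow> nat \<Rightarrow> nat \<Rightarrow> 'u set" where
  "level_group lam q eta U i l = {j\<in>U i. level lam q (eta i j) = l}"

definition avg_sinr :: "(nat \<Rightarrow> real) \<Rightarrow> nat \<Rightarrow> (nat \<Rightarrow> 'u \<Rightarrow> real) \<Rightarrow> (nat \<Rightarrow> 'u set) \<Rightarrow> nat \<Rightarrow> nat \<Rightarrow> real" where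
  "avg_sinr lam q eta U i l =
     (\<Sum>j\<in>level_group lam q eta U i l. eta i j) / real (card (level_group lam q eta U i l))"

definition C_UC :: "nat \<Rightarrow> real \<Rightarrow> (nat \<Rightarrow> real) \<Rightarrow> nat \<Rightarrow> (nat \<Rightarrow> 'u \<Rightarrow> real) \<Rightarrow> (nat \<Rightarrow> 'u set) \<Rightarrow> real" where
  "C_UC M B lam q eta U =
     (\<Sum>i\<in>{i\<in>{0..M}. card (U i) > 0}.
        B * (\<Sum>l\<in>{l\<in>{0..q}. card (level_group lam q eta U i l) > 0}.
               real (card (level_group lam q eta U i l)) / real (card (U i))
               * log 2 (1 / (1 - avg_sinr lam q eta U i l))))"

end

theory Submission
  imports Defs "HOL-Analysis.Analysis"
begin

lemma f_nonneg:
  fixes x :: real assumes "0 \<le> x" "x < 1"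
  shows "0 \<le> log 2 (1 / (1 - x))"
  using assms by (simp add: divide_simps)

lemma jensen_aux:
  fixes g :: "'a \<Rightarrow> real"
  assumes S: "finite S" "S \<noteq> {}" and g: "\<And>j. j \<in> S \<Longrightarrow> 0 \<le> g j \<and> g j < 1"
  shows "log 2 (1 / (1 - (\<Sum>j\<in>S. g j) / real (card S)))
         \<le> (\<Sum>j\<in>S. log 2 (1 / (1 - g j))) / real (card S)"
proof -
  have n: "real (card S) > 0" using S by (simp add: card_gt_0_iff)
  have "- log 2 (\<Sum>j\<in>S. (1 / real (card S)) *\<^sub>R (1 - g j))
        \<le> (\<Sum>j\<in>S. (1 / real (card S)) * (- log 2 (1 - g j)))"
    using convex_on_sum[OF S minus_log_convex[of 2], of "\<lambda>j. 1 / real (card S)" "\<lambda>j. 1 - g j"]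
      n g by (auto simp: sum_distrib_left[symmetric])
  moreover have "(\<Sum>j\<in>S. (1 / real (card S)) *\<^sub>R (1 - g j)) = 1 - (\<Sum>j\<in>S. g j) / real (card S)"
  proof -
    have "(\<Sum>j\<in>S. (1 / real (card S)) *\<^sub>R (1 - g j)) = (1 / real (card S)) * (\<Sum>j\<in>S. (1 - g j))"
      by (simp add: sum_distrib_left)
    also have "\<dots> = (1 / real (card S)) * (real (card S) - (\<Sum>j\<in>S. g j))"
      by (simp add: sum_subtractf)
    also have "\<dots> = 1 - (\<Sum>j\<in>S. g j) / real (card S)" using n by (simp add: field_simps)
    finally show ?thesis .
  qed
  moreover have L: "\<And>x::real. x < 1 \<Longrightarrow> log 2 (1 / (1 - x)) = - log 2 (1 - x)"
    by (simp add: log_divide)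
  moreover have "(\<Sum>j\<in>S. g j) / real (card S) < 1"
  proof -
    have "(\<Sum>j\<in>S. g j) < (\<Sum>j\<in>S. 1)"
      by (rule sum_strict_mono[OF S]) (use g in auto)
    then show ?thesis using n by (simp add: divide_simps)
  qed
  ultimately have "log 2 (1 / (1 - (\<Sum>j\<in>S. g j) / real (card S)))
        \<le> (\<Sum>j\<in>S. (1 / real (card S)) * log 2 (1 / (1 - g j)))"
    using g by (simp add: L)
  also have "\<dots> = (\<Sum>j\<in>S. log 2 (1 / (1 - g j))) / real (card S)"
    by (simp add: sum_divide_distrib)
  finally show ?thesis .
qed

lemma per_station:
  fixes B :: real and V :: "'u set" and e :: "'u \<Rightarrow> real" and G :: "nat \<Rightarrow> 'u set"
  assumes fin: "finite V" and B: "B > 0" and n: "card V > 0"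
    and e: "\<And>j. j \<in> V \<Longrightarrow> 0 \<le> e j \<and> e j < 1"
    and GV: "\<And>l. G l \<subseteq> V" and disj: "\<And>l k. l \<noteq> k \<Longrightarrow> G l \<inter> G k = {}"
    and L: "finite L"
  shows "B * (\<Sum>l\<in>{l\<in>L. card (G l) > 0}. real (card (G l)) / real (card V)
            * log 2 (1 / (1 - (\<Sum>j\<in>G l. e j) / real (card (G l)))))
         \<le> B / real (card V) * (\<Sum>j\<in>V. log 2 (1 / (1 - e j)))"
proof -
  define f where "f j = log 2 (1 / (1 - e j))" for j
  let ?L = "{l\<in>L. card (G l) > 0}"
  have nr: "real (card V) > 0" using n by simp
  have step: "real (card (G l)) / real (card V) * log 2 (1 / (1 - (\<Sum>j\<in>G l. e j) / real (card (G l))))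
      \<le> (\<Sum>j\<in>G l. f j) / real (card V)" if "l \<in> ?L" for l
  proof -
    have cg: "card (G l) > 0" using that by simp
    hence fg: "finite (G l)" "G l \<noteq> {}" by (auto simp: card_gt_0_iff)
    have J: "log 2 (1 / (1 - (\<Sum>j\<in>G l. e j) / real (card (G l)))) \<le> (\<Sum>j\<in>G l. f j) / real (card (G l))"
      unfolding f_def by (rule jensen_aux[OF fg]) (use e GV in blast)
    have "real (card (G l)) / real (card V) * log 2 (1 / (1 - (\<Sum>j\<in>G l. e j) / real (card (G l))))
       \<le> real (card (G l)) / real (card V) * ((\<Sum>j\<in>G l. f j) / real (card (G l)))"
      by (rule mult_left_mono[OF J]) simp
    also have "\<dots> = (\<Sum>j\<in>G l. f j) / real (card V)" using cg by simp
    finally show ?thesis .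
  qed
  have "(\<Sum>l\<in>?L. real (card (G l)) / real (card V) * log 2 (1 / (1 - (\<Sum>j\<in>G l. e j) / real (card (G l)))))
      \<le> (\<Sum>l\<in>?L. (\<Sum>j\<in>G l. f j) / real (card V))"
    by (rule sum_mono) (rule step)
  also have "\<dots> = (\<Sum>l\<in>?L. (\<Sum>j\<in>G l. f j)) / real (card V)"
    by (simp add: sum_divide_distrib)
  also have "(\<Sum>l\<in>?L. (\<Sum>j\<in>G l. f j)) = (\<Sum>j\<in>(\<Union>l\<in>?L. G l). f j)"
    by (rule sum.UNION_disjoint[symmetric]) (use L fin GV disj in \<open>auto intro: finite_subset[OF GV]\<close>)
  also have "\<dots> \<le> (\<Sum>j\<in>V. f j)"
    by (rule sum_mono2[OF fin]) (use GV e f_nonneg in \<open>auto simp: f_def\<close>)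
  finally have "(\<Sum>l\<in>?L. real (card (G l)) / real (card V) * log 2 (1 / (1 - (\<Sum>j\<in>G l. e j) / real (card (G l)))))
      \<le> (\<Sum>j\<in>V. f j) / real (card V)"
    using nr by (simp add: divide_right_mono)
  then have "B * (\<Sum>l\<in>?L. real (card (G l)) / real (card V) * log 2 (1 / (1 - (\<Sum>j\<in>G l. e j) / real (card (G l)))))
      \<le> B * ((\<Sum>j\<in>V. f j) / real (card V))"
    using B by (intro mult_left_mono) auto
  then show ?thesis by (simp add: f_def)
qed

lemma C_tot_restrict: "C_tot M B eta (restrict U {0..M}) = C_tot M B eta U"
  unfolding C_tot_def by (rule sum.cong) auto

lemma C_NC_ge:
  assumes "finite Nset" "is_assignment M Nset U"
  shows "C_tot M B eta U \<le> C_NC M Nset B eta"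
proof -
  let ?S = "{C_tot M B eta U | U. is_assignment M Nset U}"
  have "?S \<subseteq> (\<lambda>V. C_tot M B eta V) ` ({0..M} \<rightarrow>\<^sub>E Pow Nset)"
  proof
    fix x assume "x \<in> ?S"
    then obtain V where V: "is_assignment M Nset V" "x = C_tot M B eta V" by blast
    then have "restrict V {0..M} \<in> {0..M} \<rightarrow>\<^sub>E Pow Nset"
      by (auto simp: is_assignment_def)
    then show "x \<in> (\<lambda>V. C_tot M B eta V) ` ({0..M} \<rightarrow>\<^sub>E Pow Nset)"
      using V C_tot_restrict by (metis image_eqI)
  qed
  moreover have "finite ({0..M} \<rightarrow>\<^sub>E Pow Nset)"
    using assms(1) by (intro finite_PiE) auto
  ultimately have "finite ?S" by (meson finite_imageI finite_subset)
  moreover have "C_tot M B eta U \<in> ?S" using assms(2) by blast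
  ultimately show ?thesis unfolding C_NC_def by (rule Max_ge)
qed

theorem lemma1:
  fixes M q :: nat and Nset :: "'u set" and B :: real
    and eta :: "nat \<Rightarrow> 'u \<Rightarrow> real" and lam :: "nat \<Rightarrow> real"
    and U :: "nat \<Rightarrow> 'u set"
  assumes "finite Nset"
    and "B > 0"
    and "\<And>i j. i \<in> {0..M} \<Longrightarrow> j \<in> Nset \<Longrightarrow> 0 \<le> eta i j \<and> eta i j < 1"
    and "q \<ge> 1"
    and "\<And>l. 1 \<le> l \<Longrightarrow> l < q \<Longrightarrow> lam l < lam (l + 1)"
    and "is_assignment M Nset U"
  shows "C_UC M B lam q eta U \<le> C_NC M Nset B eta"
proof -
  have "C_UC M B lam q eta U \<le> C_tot M B eta U"
    unfolding C_UC_def C_tot_def avg_sinr_def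
  proof (rule sum_mono)
    fix i assume i: "i \<in> {i \<in> {0..M}. card (U i) > 0}"
    have sub: "U i \<subseteq> Nset" using i assms(6) by (auto simp: is_assignment_def)
    show "B * (\<Sum>l\<in>{l\<in>{0..q}. card (level_group lam q eta U i l) > 0}.
            real (card (level_group lam q eta U i l)) / real (card (U i)) *
            log 2 (1 / (1 - (\<Sum>j\<in>level_group lam q eta U i l. eta i j) /
                                real (card (level_group lam q eta U i l)))))
          \<le> B / real (card (U i)) * (\<Sum>j\<in>U i. log 2 (1 / (1 - eta i j)))"
      by (rule per_station[where G = "level_group lam q eta U i" and e = "eta i"])
         (use i sub assms(1,2,3) finite_subset in \<open>auto simp: level_group_def\<close>)
  qed
  also have "\<dots> \<le> C_NC M Nset B eta" using C_NC_ge assms(1,6) .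
  finally show ?thesis .
qed

end
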